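(* If $\alpha$ is irrational with partial quotients bounded in average, then $|A_\alpha\cap[n]|\gg\sqrt{n/\log n}$ as $n\to\infty$ (implicit constant depending on $\alpha$).
   Context: $[n]=\{1,\dots,n\}$; $\{x\}$ is the fractional part of $x$. For irrational $\alpha$ and $k\ge1$, $B_\alpha(k)=|\{1\le q\le k:\{q\alpha\}\le\{k\alpha\}\}|$, and $A_\alpha=\{B_\alpha(k):k\ge1\}$. If $\alpha=[a_0;a_1,a_2,\dots]$, its partial quotients are bounded in average if there is $B$ with $a_1+\dots+a_m\le Bm$ for all $m\ge1$. *)

theory Defs
  imports "HOL-Analysis.Analysis"
begin

fun cf_rem :: "real \<Rightarrow> nat \<Rightarrow> real" where
  "cf_rem \<alpha> 0 = \<alpha>"
| "cf_rem \<alpha> (Suc n) = 1 / frac (cf_rem \<alpha> n)"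

definition cf_pq :: "real \<Rightarrow> nat \<Rightarrow> int" where
  "cf_pq \<alpha> n = \<lfloor>cf_rem \<alpha> n\<rfloor>"

definition pq_bounded_in_average :: "real \<Rightarrow> bool" where
  "pq_bounded_in_average \<alpha> \<longleftrightarrow>
     (\<exists>B::real. \<forall>m\<ge>1. real_of_int (\<Sum>i=1..m. cf_pq \<alpha> i) \<le> B * real m)"

definition B_alpha :: "real \<Rightarrow> nat \<Rightarrow> nat" where
  "B_alpha \<alpha> k = card {q \<in> {1..k}. frac (real q * \<alpha>) \<le> frac (real k * \<alpha>)}"

definition A_alpha :: "real \<Rightarrow> nat set" where
  "A_alpha \<alpha> = {B_alpha \<alpha> k | k. k \<ge> 1}"

end

theory Submission
  imports Defs
begin


fun cfQ :: "real \<Rightarrow> nat \<Rightarrow> int" where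
  "cfQ a 0 = 0"
| "cfQ a (Suc 0) = 1"
| "cfQ a (Suc (Suc n)) = cf_pq a (Suc n) * cfQ a (Suc n) + cfQ a n"

fun cfP :: "real \<Rightarrow> nat \<Rightarrow> int" where
  "cfP a 0 = 1"
| "cfP a (Suc 0) = cf_pq a 0"
| "cfP a (Suc (Suc n)) = cf_pq a (Suc n) * cfP a (Suc n) + cfP a n"

definition cfT :: "real \<Rightarrow> nat \<Rightarrow> real" where
  "cfT a n = real_of_int (cfQ a n) * a - real_of_int (cfP a n)"

lemma rem_irr: assumes "a \<notin> \<rat>" shows "cf_rem a n \<notin> \<rat>"
proof (induction n)
  case 0 then show ?case using assms by simp
next
  case (Suc n)
  show ?case
  proof
    assume "cf_rem a (Suc n) \<in> \<rat>"
    then have "1 / frac (cf_rem a n) \<in> \<rat>" by simp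
    then have "frac (cf_rem a n) \<in> \<rat>"
      by (metis Rats_1 Rats_divide divide_divide_eq_right div_by_1 divide_self_if mult_1)
    then have "cf_rem a n \<in> \<rat>"
      by (metis Rats_add Rats_of_int frac_def diff_add_cancel)
    with Suc show False by simp
  qed
qed

lemma frac_rem_pos: assumes "a \<notin> \<rat>" shows "frac (cf_rem a n) > 0"
proof -
  have "cf_rem a n \<notin> \<int>" using rem_irr[OF assms] Ints_subset_Rats by blast
  then show ?thesis using frac_ge_0[of "cf_rem a n"] frac_eq_0_iff by fastforce
qed

lemma rem_Suc_gt1: assumes "a \<notin> \<rat>" shows "cf_rem a (Suc n) > 1"
  using frac_rem_pos[OF assms, of n] frac_lt_1[of "cf_rem a n"] by simp

lemma pq_Suc_ge1: assumes "a \<notin> \<rat>" shows "cf_pq a (Suc n) \<ge> 1"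
  using rem_Suc_gt1[OF assms, of n] unfolding cf_pq_def by linarith

lemma frac_rem_mult: assumes "a \<notin> \<rat>" shows "frac (cf_rem a n) * cf_rem a (Suc n) = 1"
  using frac_rem_pos[OF assms, of n] by simp

lemma rem_lt: "cf_rem a n < real_of_int (cf_pq a n) + 1"
  unfolding cf_pq_def by linarith

lemma cfT_rec: assumes "a \<notin> \<rat>" shows "cfT a (Suc n) = - frac (cf_rem a n) * cfT a n"
proof (induction n)
  case 0
  then show ?case by (simp add: cfT_def cf_pq_def frac_def)
next
  case (Suc n)
  have e: "cfT a (Suc (Suc n)) = cf_pq a (Suc n) * cfT a (Suc n) + cfT a n"
    by (simp add: cfT_def algebra_simps)
  have "cfT a n = - cf_rem a (Suc n) * cfT a (Suc n)"
    using Suc frac_rem_mult[OF assms, of n] by (simp add: algebra_simps)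
  then have "cfT a (Suc (Suc n)) = (cf_pq a (Suc n) - cf_rem a (Suc n)) * cfT a (Suc n)"
    using e by (simp add: algebra_simps)
  then show ?case by (simp add: frac_def cf_pq_def)
qed

lemma cf_det: "cfP a (Suc n) * cfQ a n - cfP a n * cfQ a (Suc n) = (-1) ^ Suc n"
proof (induction n)
  case 0 then show ?case by simp
next
  case (Suc n)
  then show ?case by (simp add: algebra_simps)
qed

lemma cfQ_nonneg: assumes "a \<notin> \<rat>" shows "cfQ a n \<ge> 0 \<and> cfQ a n \<le> cfQ a (Suc n)"
proof (induction n)
  case 0 then show ?case by simp
next
  case (Suc n)
  have "cf_pq a (Suc n) \<ge> 1" by (rule pq_Suc_ge1[OF assms])
  then have "cf_pq a (Suc n) * cfQ a (Suc n) \<ge> cfQ a (Suc n)"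
    using Suc by (metis mult_le_cancel_right1 not_le order.trans mult_nonneg_nonneg zero_le_one less_le_trans)
  then show ?case using Suc by simp
qed

lemma cfQ_pos: assumes "a \<notin> \<rat>" shows "cfQ a (Suc n) \<ge> 1"
proof (induction n)
  case 0 then show ?case by simp
next
  case (Suc n) then show ?case using cfQ_nonneg[OF assms, of "Suc n"] by linarith
qed

lemma cfQ_double: assumes "a \<notin> \<rat>" shows "cfQ a (Suc (Suc n)) \<ge> cfQ a (Suc n) + cfQ a n"
proof -
  have "cf_pq a (Suc n) \<ge> 1" by (rule pq_Suc_ge1[OF assms])
  moreover have "cfQ a (Suc n) \<ge> 0" using cfQ_nonneg[OF assms] by blast
  ultimately have "cf_pq a (Suc n) * cfQ a (Suc n) \<ge> cfQ a (Suc n)"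
    by (simp add: mult_le_cancel_right1)
  then show ?thesis by simp
qed

lemma cfQ_growth: assumes "a \<notin> \<rat>" shows "2 ^ k \<le> cfQ a (2*k+1) \<and> 2 ^ k \<le> cfQ a (2*k+2)"
proof (induction k)
  case 0 then show ?case using cfQ_pos[OF assms, of 1] by simp
next
  case (Suc k)
  have m1: "cfQ a (2*k+1) \<le> cfQ a (2*k+2)" "cfQ a (2*k+2) \<le> cfQ a (2*k+3)"
    using cfQ_nonneg[OF assms, of "2*k+1"] cfQ_nonneg[OF assms, of "2*k+2"] by (simp_all add: numeral_eq_Suc)
  have "cfQ a (2*k+3) \<ge> cfQ a (2*k+2) + cfQ a (2*k+1)"
    using cfQ_double[OF assms, of "2*k+1"] by (simp add: numeral_eq_Suc)
  moreover have "cfQ a (2*k+4) \<ge> cfQ a (2*k+3) + cfQ a (2*k+2)"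
    using cfQ_double[OF assms, of "2*k+2"] by (simp add: numeral_eq_Suc)
  ultimately show ?case using Suc m1 by (simp add: numeral_eq_Suc)
qed



lemma cfT_abs: assumes irr: "a \<notin> \<rat>"
  shows "\<bar>cfT a (Suc n)\<bar> * (real_of_int (cfQ a (Suc n)) * cf_rem a (Suc n) + real_of_int (cfQ a n)) = 1"
proof -
  have id: "real_of_int (cfQ a n) * cfT a (Suc n) - real_of_int (cfQ a (Suc n)) * cfT a n
      = - real_of_int (cfP a (Suc n) * cfQ a n - cfP a n * cfQ a (Suc n))"
    by (simp add: cfT_def algebra_simps)
  have "cfT a n = - cf_rem a (Suc n) * cfT a (Suc n)"
    using cfT_rec[OF irr, of n] frac_rem_mult[OF irr, of n] by (simp add: algebra_simps)
  with id have "cfT a (Suc n) * (real_of_int (cfQ a (Suc n)) * cf_rem a (Suc n) + real_of_int (cfQ a n))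
      = - real_of_int ((-1::int) ^ Suc n)" unfolding cf_det by (simp add: algebra_simps)
  then have "\<bar>cfT a (Suc n) * (real_of_int (cfQ a (Suc n)) * cf_rem a (Suc n) + real_of_int (cfQ a n))\<bar> = 1"
    by simp
  moreover have "real_of_int (cfQ a (Suc n)) * cf_rem a (Suc n) + real_of_int (cfQ a n) \<ge> 0"
    using cfQ_nonneg[OF irr, of n] cfQ_pos[OF irr, of n] rem_Suc_gt1[OF irr, of n] by simp
  ultimately show ?thesis by (simp add: abs_mult)
qed

lemma cfT_lower: assumes irr: "a \<notin> \<rat>"
  shows "\<bar>cfT a (Suc n)\<bar> \<ge> 1 / (real_of_int (cfQ a (Suc n)) * (real_of_int (cf_pq a (Suc n)) + 2))"
proof -
  let ?D = "real_of_int (cfQ a (Suc n)) * cf_rem a (Suc n) + real_of_int (cfQ a n)"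
  have q: "real_of_int (cfQ a n) \<le> real_of_int (cfQ a (Suc n))" "real_of_int (cfQ a (Suc n)) \<ge> 1"
    using cfQ_nonneg[OF irr, of n] cfQ_pos[OF irr, of n] by simp_all
  have "?D \<le> real_of_int (cfQ a (Suc n)) * (real_of_int (cf_pq a (Suc n)) + 2)"
  proof -
    have "real_of_int (cfQ a (Suc n)) * cf_rem a (Suc n) \<le> real_of_int (cfQ a (Suc n)) * (real_of_int (cf_pq a (Suc n)) + 1)"
      using rem_lt[of a "Suc n"] q by (intro mult_left_mono) auto
    then show ?thesis using q by (simp add: algebra_simps)
  qed
  moreover have "?D > 0" using q rem_Suc_gt1[OF irr, of n] cfQ_nonneg[OF irr, of n]
    by (smt (verit) mult_le_cancel_left1 of_int_0_le_iff)
  ultimately have "1 / (real_of_int (cfQ a (Suc n)) * (real_of_int (cf_pq a (Suc n)) + 2)) \<le> 1 / ?D"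
    by (intro divide_left_mono) auto
  also have "1 / ?D = \<bar>cfT a (Suc n)\<bar>" using cfT_abs[OF irr, of n] \<open>?D > 0\<close>
    by (simp add: field_simps)
  finally show ?thesis .
qed

lemma best_approx: assumes irr: "a \<notin> \<rat>" and d: "1 \<le> d" "d < cfQ a (Suc (Suc n))"
  shows "\<bar>real_of_int d * a - real_of_int p\<bar> \<ge> \<bar>cfT a (Suc n)\<bar>"
proof -
  define s where "s = cfP a (Suc (Suc n)) * cfQ a (Suc n) - cfP a (Suc n) * cfQ a (Suc (Suc n))"
  have s2: "s * s = 1" unfolding s_def cf_det[of a "Suc n"]
    by (simp add: power_mult_distrib[symmetric])
  define u where "u = s * (d * cfP a (Suc (Suc n)) - p * cfQ a (Suc (Suc n)))"
  define v where "v = s * (p * cfQ a (Suc n) - d * cfP a (Suc n))"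
  have du: "d = u * cfQ a (Suc n) + v * cfQ a (Suc (Suc n))"
  proof -
    have "u * cfQ a (Suc n) + v * cfQ a (Suc (Suc n)) = s * s * d"
      unfolding u_def v_def s_def by (simp add: algebra_simps)
    then show ?thesis using s2 by simp
  qed
  have pu: "p = u * cfP a (Suc n) + v * cfP a (Suc (Suc n))"
  proof -
    have "u * cfP a (Suc n) + v * cfP a (Suc (Suc n)) = s * s * p"
      unfolding u_def v_def s_def by (simp add: algebra_simps)
    then show ?thesis using s2 by simp
  qed
  define f where "f = frac (cf_rem a (Suc n))"
  have f: "0 < f" "f < 1" unfolding f_def
    by (rule frac_rem_pos[OF irr]) (rule frac_lt_1)
  have "real_of_int d * a - real_of_int p = real_of_int u * cfT a (Suc n) + real_of_int v * cfT a (Suc (Suc n))"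
    by (simp add: du pu cfT_def algebra_simps)
  also have "\<dots> = cfT a (Suc n) * (real_of_int u - real_of_int v * f)"
    using cfT_rec[OF irr, of "Suc n"] unfolding f_def by (simp add: algebra_simps)
  finally have eq: "real_of_int d * a - real_of_int p = cfT a (Suc n) * (real_of_int u - real_of_int v * f)" .
  have Q1: "cfQ a (Suc n) \<ge> 1" by (rule cfQ_pos[OF irr])
  have Q2: "cfQ a (Suc (Suc n)) \<ge> 1" by (rule cfQ_pos[OF irr])
  have "\<bar>real_of_int u - real_of_int v * f\<bar> \<ge> 1"
  proof (cases "v = 0")
    case True
    then have "u \<noteq> 0" using du d by auto
    then show ?thesis using True by simp
  next
    case False
    show ?thesis
    proof (cases "v > 0")
      case True
      then have "v * cfQ a (Suc (Suc n)) \<ge> cfQ a (Suc (Suc n))" using Q2 by simp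
      then have "u * cfQ a (Suc n) < 0" using du d by linarith
      then have "u \<le> -1" using Q1 by (smt (verit) mult_nonneg_nonneg)
      moreover have "real_of_int v * f \<ge> 0" using True f by simp
      ultimately show ?thesis by linarith
    next
      case False
      then have "v < 0" using \<open>v \<noteq> 0\<close> by simp
      then have "v * cfQ a (Suc (Suc n)) < 0" using Q2 by (simp add: mult_neg_pos)
      then have "u * cfQ a (Suc n) > 0" using du d by linarith
      then have "u \<ge> 1" using Q1 by (smt (verit) mult_nonpos_nonneg)
      moreover have "real_of_int v * f \<le> 0" using \<open>v < 0\<close> f by (simp add: mult_nonpos_nonneg)
      ultimately show ?thesis by linarith
    qed
  qed
  then have "\<bar>cfT a (Suc n)\<bar> * 1 \<le> \<bar>cfT a (Suc n)\<bar> * \<bar>real_of_int u - real_of_int v * f\<bar>"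
    by (intro mult_left_mono) auto
  then show ?thesis unfolding eq abs_mult by simp
qed

lemma cfQ_ge_index: assumes irr: "a \<notin> \<rat>" shows "cfQ a (Suc (Suc j)) \<ge> int j + 1"
proof (induction j)
  case 0 then show ?case using cfQ_pos[OF irr, of 1] by simp
next
  case (Suc j)
  have "cfQ a (Suc (Suc (Suc j))) \<ge> cfQ a (Suc (Suc j)) + cfQ a (Suc j)"
    by (rule cfQ_double[OF irr])
  then show ?case using Suc.IH cfQ_pos[OF irr, of j] by linarith
qed

lemma dioph: assumes irr: "a \<notin> \<rat>" and d: "(1::int) \<le> d"
  shows "\<exists>m\<ge>1. cfQ a m \<le> d \<and>
     1 / (real_of_int d * (real_of_int (cf_pq a m) + 2)) \<le> \<bar>real_of_int d * a - real_of_int p\<bar>"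
proof -
  have ex: "\<exists>j. d < cfQ a (Suc (Suc j))" using cfQ_ge_index[OF irr, of "nat d"] d
    by (intro exI[of _ "nat d"]) simp
  define j where "j = (LEAST j. d < cfQ a (Suc (Suc j)))"
  have j1: "d < cfQ a (Suc (Suc j))" unfolding j_def using LeastI_ex[OF ex] .
  have "\<exists>n. cfQ a (Suc n) \<le> d \<and> d < cfQ a (Suc (Suc n))"
  proof (cases j)
    case 0 then show ?thesis using j1 d by (intro exI[of _ 0]) simp
  next
    case (Suc j')
    have "j' < j" using Suc by simp
    then have "\<not> d < cfQ a (Suc (Suc j'))" using not_less_Least j_def by metis
    then show ?thesis using j1 Suc by (intro exI[of _ "Suc j'"]) simp
  qed
  then obtain n where n: "cfQ a (Suc n) \<le> d" "d < cfQ a (Suc (Suc n))" by blast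
  define X where "X = real_of_int (cfQ a (Suc n)) * (real_of_int (cf_pq a (Suc n)) + 2)"
  define Y where "Y = real_of_int d * (real_of_int (cf_pq a (Suc n)) + 2)"
  have le: "X \<le> Y" unfolding X_def Y_def
      using n pq_Suc_ge1[OF irr, of n] by (intro mult_right_mono) auto
  have pos: "0 < X"
  proof -
    have "real_of_int (cfQ a (Suc n)) \<ge> 1" using cfQ_pos[OF irr, of n] by simp
    moreover have "real_of_int (cf_pq a (Suc n)) \<ge> 1" using pq_Suc_ge1[OF irr, of n] by simp
    ultimately show ?thesis unfolding X_def by (intro mult_pos_pos) linarith+
  qed
  have "1 / Y \<le> 1 / X" using le pos by (intro divide_left_mono) auto
  then have "1 / (real_of_int d * (real_of_int (cf_pq a (Suc n)) + 2))
      \<le> 1 / (real_of_int (cfQ a (Suc n)) * (real_of_int (cf_pq a (Suc n)) + 2))"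
    unfolding X_def Y_def .
  also have "\<dots> \<le> \<bar>cfT a (Suc n)\<bar>" by (rule cfT_lower[OF irr])
  also have "\<dots> \<le> \<bar>real_of_int d * a - real_of_int p\<bar>" by (rule best_approx[OF irr d n(2)])
  finally show ?thesis using n by (intro exI[of _ "Suc n"]) auto
qed



lemma pq_le_avg: assumes irr: "a \<notin> \<rat>" and B: "\<forall>m\<ge>1. real_of_int (\<Sum>i=1..m. cf_pq a i) \<le> B * real m"
  and m: "m \<ge> 1" shows "real_of_int (cf_pq a m) \<le> B * real m"
proof -
  have "cf_pq a m \<le> (\<Sum>i=1..m. cf_pq a i)"
  proof (rule member_le_sum)
    show "m \<in> {1..m}" using m by simp
    fix i assume "i \<in> {1..m} - {m}"
    then obtain j where "i = Suc j" by (cases i) auto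
    then show "0 \<le> cf_pq a i" using pq_Suc_ge1[OF irr, of j] by simp
  qed simp
  then show ?thesis using B m by (smt (verit) of_int_le_iff)
qed

lemma Q_index_bound: assumes irr: "a \<notin> \<rat>" and m: "m \<ge> 1" and n: "n \<ge> 3"
  and Q: "real_of_int (cfQ a m) \<le> real n"
  shows "real m \<le> 5 * ln (real n)"
proof -
  define k where "k = (m - 1) div 2"
  have "m = 2*k+1 \<or> m = 2*k+2" unfolding k_def using m by auto
  then have "2 ^ k \<le> cfQ a m" using cfQ_growth[OF irr, of k] by auto
  then have "(2::real) ^ k \<le> real n" using Q
    by (metis of_int_le_iff of_int_numeral of_int_power order_trans)
  then have "real k \<le> log 2 (real n)" by (intro le_log_of_power) auto
  also have "log 2 (real n) = ln (real n) / ln 2" by (simp add: log_def)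
  also have "\<dots> \<le> ln (real n) / (2/3)"
  proof (rule divide_left_mono)
    show "0 \<le> ln (real n)" using n by simp
  qed (use ln2_ge_two_thirds in auto)
  finally have kb: "real k \<le> 3/2 * ln (real n)" by simp
  have "ln (real n) \<ge> 1"
  proof -
    have "ln (272/100) \<le> ln (real n)" using n by (intro ln_mono) auto
    then show ?thesis using ln_272_gt_1 by linarith
  qed
  moreover have "real m \<le> 2 * real k + 2" using \<open>m = 2*k+1 \<or> m = 2*k+2\<close> by auto
  ultimately show ?thesis using kb by linarith
qed

lemma dioph_bound: assumes irr: "a \<notin> \<rat>" and avg: "pq_bounded_in_average a"
  shows "\<exists>K>0. \<forall>n d p. 3 \<le> n \<longrightarrow> 1 \<le> d \<longrightarrow> d \<le> n \<longrightarrow>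
     1 / (K * real d * ln (real n)) \<le> \<bar>real d * a - real_of_int p\<bar>"
proof -
  obtain B where B: "\<forall>m\<ge>1. real_of_int (\<Sum>i=1..m. cf_pq a i) \<le> B * real m"
    using avg unfolding pq_bounded_in_average_def by blast
  have B1: "B \<ge> 1" using pq_le_avg[OF irr B, of 1] pq_Suc_ge1[OF irr, of 0] by simp
  define K where "K = 5 * B + 2"
  have "K > 0" using B1 unfolding K_def by simp
  moreover have "1 / (K * real d * ln (real n)) \<le> \<bar>real d * a - real_of_int p\<bar>"
    if n: "3 \<le> n" and d: "1 \<le> d" "d \<le> n" for n d :: nat and p
  proof -
    obtain m where m: "m \<ge> 1" "cfQ a m \<le> int d"
      and ineq: "1 / (real_of_int (int d) * (real_of_int (cf_pq a m) + 2)) \<le> \<bar>real_of_int (int d) * a - real_of_int p\<bar>"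
      using dioph[OF irr, of "int d" p] d by auto
    have "real_of_int (cfQ a m) \<le> real n" using m d by linarith
    then have mb: "real m \<le> 5 * ln (real n)" using Q_index_bound[OF irr m(1) n] by blast
    have am: "real_of_int (cf_pq a m) \<le> B * real m" by (rule pq_le_avg[OF irr B m(1)])
    have ln1: "ln (real n) \<ge> 1"
    proof -
      have "ln (272/100) \<le> ln (real n)" using n by (intro ln_mono) auto
      then show ?thesis using ln_272_gt_1 by linarith
    qed
    have bm: "B * real m \<le> B * (5 * ln (real n))" using mb B1 by (intro mult_left_mono) auto
    have e1: "K * ln (real n) = 5 * (B * ln (real n)) + 2 * ln (real n)" unfolding K_def by (simp add: algebra_simps)
    have e2: "B * (5 * ln (real n)) = 5 * (B * ln (real n))" by simp
    have am2: "real_of_int (cf_pq a m) + 2 \<le> K * ln (real n)"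
      using am ln1 bm e1 e2 by linarith
    have apos: "real_of_int (cf_pq a m) + 2 > 0"
      using m(1) pq_Suc_ge1[OF irr, of "m - 1"] by simp
    have dpos: "real d > 0" using d by simp
    have "real d * (real_of_int (cf_pq a m) + 2) \<le> real d * (K * ln (real n))"
      using am2 dpos by (intro mult_left_mono) auto
    then have "1 / (real d * (K * ln (real n))) \<le> 1 / (real d * (real_of_int (cf_pq a m) + 2))"
      using apos dpos by (intro divide_left_mono) auto
    then show ?thesis using ineq by (simp add: mult.assoc mult.left_commute)
  qed
  ultimately show ?thesis by blast
qed



lemma alg_step:
  fixes c D E d e x :: real
  assumes "c > 0" "D \<ge> 0" "E \<ge> 0" "d > 0" "e * d \<ge> c" "c * x^2 \<le> D * E" "x \<ge> 0"
  shows "c * (x + 1)^2 \<le> (D + d) * (E + e)"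
proof -
  have e0: "e \<ge> 0"
  proof (rule ccontr)
    assume "\<not> e \<ge> 0"
    then have "e * d < 0" using assms(4) by (simp add: mult_neg_pos)
    then show False using assms(1,5) by linarith
  qed
  have id1: "(D*e + d*E)^2 = (D*e - d*E)^2 + 4 * (D*E) * (e*d)" by algebra
  have m: "(c * x^2) * c \<le> (D*E) * (e*d)" using assms(6,5)
  proof (rule mult_mono)
    show "0 \<le> D * E" using assms by simp
    show "0 \<le> c" using assms by simp
  qed
  have "(2*c*x)^2 = 4 * (c * x^2) * c" by algebra
  also have "\<dots> \<le> 4 * (D*E) * (e*d)" using m by linarith
  also have "\<dots> \<le> (D*e + d*E)^2" unfolding id1 by simp
  finally have "(2*c*x)^2 \<le> (D*e + d*E)^2" .
  then have s: "2*c*x \<le> D*e + d*E"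
  proof (rule power2_le_imp_le)
    show "0 \<le> D*e + d*E" using assms e0 by simp
  qed
  have "c * (x+1)^2 = c * x^2 + 2*c*x + c" by algebra
  also have "\<dots> \<le> D*E + (D*e + d*E) + e*d" using s assms by linarith
  also have "\<dots> = (D + d) * (E + e)" by algebra
  finally show ?thesis .
qed
lemma chain_card:
  fixes y :: "nat \<Rightarrow> real" and c :: real
  assumes c: "c > 0" and gap: "\<forall>k\<in>F. \<forall>k'\<in>F. k < k' \<longrightarrow> c / real (k' - k) \<le> y k - y k'"
    and fin: "finite F" and ne: "F \<noteq> {}"
  shows "c * (real (card F) - 1)^2 \<le> real (Max F - Min F) * (y (Min F) - y (Max F))"
  using gap fin ne
proof (induction "card F" arbitrary: F)
  case 0 then show ?case by simp
next
  case (Suc r)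
  show ?case
  proof (cases "r = 0")
    case True
    then have "card F = 1" using Suc.hyps(2) by simp
    then obtain x where "F = {x}" by (rule card_1_singletonE)
    then show ?thesis by simp
  next
    case False
    define M where "M = Max F"
    define F0 where "F0 = F - {M}"
    have MF: "M \<in> F" unfolding M_def using Suc.prems by simp
    have cF0: "card F0 = r" unfolding F0_def using MF Suc.hyps(2) Suc.prems by simp
    have finF0: "finite F0" unfolding F0_def using Suc.prems by simp
    have neF0: "F0 \<noteq> {}" using cF0 False by auto
    have gap0: "\<forall>k\<in>F0. \<forall>k'\<in>F0. k < k' \<longrightarrow> c / real (k' - k) \<le> y k - y k'"
      using Suc.prems(1) unfolding F0_def by blast
    have IH: "c * (real (card F0) - 1)^2 \<le> real (Max F0 - Min F0) * (y (Min F0) - y (Max F0))"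
      using Suc.hyps(1)[OF cF0[symmetric] gap0 finF0 neF0] .
    have M0F: "Max F0 \<in> F0" using finF0 neF0 by simp
    have "Max F0 \<le> M" using M0F Suc.prems(2) unfolding F0_def M_def by simp
    moreover have "Max F0 \<noteq> M" using M0F unfolding F0_def by simp
    ultimately have M0lt: "Max F0 < M" by simp
    have m0le: "Min F0 \<le> Max F0" using finF0 neF0 by simp
    have m0F: "Min F0 \<in> F0" using finF0 neF0 by simp
    have minF: "Min F = Min F0"
    proof -
      have "Min F \<le> Min F0" using m0F Suc.prems unfolding F0_def by simp
      moreover have "Min F0 \<le> k" if "k \<in> F" for k
      proof (cases "k = M")
        case True then show ?thesis using m0le M0lt by simp
      next
        case False then show ?thesis using that finF0 unfolding F0_def by simp
      qed
      then have "Min F0 \<le> Min F" using Suc.prems by simp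
      ultimately show ?thesis by simp
    qed
    have E0: "y (Min F0) - y (Max F0) \<ge> 0"
    proof (cases "Min F0 = Max F0")
      case True then show ?thesis by simp
    next
      case False
      then have "Min F0 < Max F0" using m0le by simp
      then have "c / real (Max F0 - Min F0) \<le> y (Min F0) - y (Max F0)" using gap0 m0F M0F by blast
      moreover have "c / real (Max F0 - Min F0) \<ge> 0" using c by simp
      ultimately show ?thesis by (rule order_trans[rotated])
    qed
    have gM: "c / real (M - Max F0) \<le> y (Max F0) - y M"
      using Suc.prems(1) M0lt MF M0F unfolding F0_def by blast
    have dpos: "real (M - Max F0) > 0" using M0lt by simp
    then have gM': "(y (Max F0) - y M) * real (M - Max F0) \<ge> c"
      using gM by (simp add: divide_le_eq)
    have x0: "real (card F0) - 1 \<ge> 0" using neF0 finF0 by (simp add: Suc_leI card_gt_0_iff)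
    have "c * ((real (card F0) - 1) + 1)^2 \<le> (real (Max F0 - Min F0) + real (M - Max F0)) * ((y (Min F0) - y (Max F0)) + (y (Max F0) - y M))"
      by (rule alg_step[OF c _ E0 dpos gM' IH x0]) simp
    moreover have "real (Max F0 - Min F0) + real (M - Max F0) = real (Max F - Min F)"
      using m0le M0lt minF unfolding M_def by simp
    moreover have "real (card F0) - 1 + 1 = real (card F) - 1" using cF0 Suc.hyps(2) by simp
    ultimately show ?thesis using minF unfolding M_def by simp
  qed
qed

lemma B_alpha_range: "k \<ge> 1 \<Longrightarrow> 1 \<le> B_alpha a k \<and> B_alpha a k \<le> k"
proof -
  assume k: "k \<ge> 1"
  have "k \<in> {q \<in> {1..k}. frac (real q * a) \<le> frac (real k * a)}" using k by simp
  then have "card {q \<in> {1..k}. frac (real q * a) \<le> frac (real k * a)} \<ge> 1"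
  proof -
    have "finite {q \<in> {1..k}. frac (real q * a) \<le> frac (real k * a)}" by simp
    then have "0 < card {q \<in> {1..k}. frac (real q * a) \<le> frac (real k * a)}"
      using \<open>k \<in> _\<close> by (simp add: card_gt_0_iff) blast
    then show ?thesis by simp
  qed
  moreover have "card {q \<in> {1..k}. frac (real q * a) \<le> frac (real k * a)} \<le> card {1..k}"
    by (intro card_mono) auto
  ultimately show ?thesis unfolding B_alpha_def by simp
qed

lemma B_alpha_strict: assumes "1 \<le> k" "k < k'" "frac (real k * a) \<le> frac (real k' * a)"
  shows "B_alpha a k < B_alpha a k'"
proof -
  let ?S = "{q \<in> {1..k}. frac (real q * a) \<le> frac (real k * a)}"
  let ?S' = "{q \<in> {1..k'}. frac (real q * a) \<le> frac (real k' * a)}"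
  have "insert k' ?S \<subseteq> ?S'" using assms by auto
  then have "card (insert k' ?S) \<le> card ?S'" by (intro card_mono) auto
  moreover have "k' \<notin> ?S" using assms by auto
  ultimately have "card ?S + 1 \<le> card ?S'" by simp
  then show ?thesis unfolding B_alpha_def by simp
qed



lemma fiber_card:
  assumes irr: "a \<notin> \<rat>" and K: "K > 0"
    and KB: "\<forall>n d p. 3 \<le> n \<longrightarrow> 1 \<le> d \<longrightarrow> d \<le> n \<longrightarrow>
        1 / (K * real d * ln (real n)) \<le> \<bar>real d * a - real_of_int p\<bar>"
    and n: "n \<ge> 3"
  shows "real (card {k \<in> {1..n}. B_alpha a k = v}) \<le> 1 + sqrt (K * real n * ln (real n))"
proof (cases "{k \<in> {1..n}. B_alpha a k = v} = {}")
  case True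
  have "0 \<le> K * real n * ln (real n)" using K n by simp
  then have "0 \<le> sqrt (K * real n * ln (real n))" by simp
  then show ?thesis unfolding True by simp
next
  case False
  define F where "F = {k \<in> {1..n}. B_alpha a k = v}"
  define y where "y = (\<lambda>k::nat. frac (real k * a))"
  define c0 where "c0 = 1 / (K * ln (real n))"
  have ln1: "ln (real n) \<ge> 1"
  proof -
    have "ln (272/100) \<le> ln (real n)" using n by (intro ln_mono) auto
    then show ?thesis using ln_272_gt_1 by linarith
  qed
  have c0: "c0 > 0" unfolding c0_def using K ln1 by simp
  have fin: "finite F" unfolding F_def by simp
  have ne: "F \<noteq> {}" using False unfolding F_def by simp
  have gap: "\<forall>k\<in>F. \<forall>k'\<in>F. k < k' \<longrightarrow> c0 / real (k' - k) \<le> y k - y k'"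
  proof (intro ballI impI)
    fix k k' assume kF: "k \<in> F" and k'F: "k' \<in> F" and kk: "k < k'"
    have k1: "1 \<le> k" "k' \<le> n" using kF k'F unfolding F_def by auto
    have eqB: "B_alpha a k = B_alpha a k'" using kF k'F unfolding F_def by simp
    have "\<not> (frac (real k * a) \<le> frac (real k' * a))"
    proof
      assume h: "frac (real k * a) \<le> frac (real k' * a)"
      have "B_alpha a k < B_alpha a k'" by (rule B_alpha_strict[OF k1(1) kk h])
      with eqB show False by simp
    qed
    then have lt: "y k' < y k" unfolding y_def by simp
    define p where "p = \<lfloor>real k' * a\<rfloor> - \<lfloor>real k * a\<rfloor>"
    have "y k - y k' = - (real (k' - k) * a - real_of_int p)"
      unfolding y_def p_def frac_def using kk by (simp add: of_nat_diff algebra_simps)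
    then have eq: "y k - y k' = \<bar>real (k' - k) * a - real_of_int p\<bar>" using lt by simp
    have "1 / (K * real (k' - k) * ln (real n)) \<le> \<bar>real (k' - k) * a - real_of_int p\<bar>"
      by (rule KB[rule_format]) (use n kk k1 in auto)
    moreover have "c0 / real (k' - k) = 1 / (K * real (k' - k) * ln (real n))"
      unfolding c0_def by simp
    ultimately show "c0 / real (k' - k) \<le> y k - y k'" using eq by simp
  qed
  have main: "c0 * (real (card F) - 1)^2 \<le> real (Max F - Min F) * (y (Min F) - y (Max F))"
    by (rule chain_card[OF c0 gap fin ne])
  have "Max F \<in> F" "Min F \<in> F" using fin ne by simp_all
  then have "Max F \<le> n" "Min F \<ge> 1" unfolding F_def by simp_all
  then have D: "real (Max F - Min F) \<le> real n" by simp
  have Y: "y (Min F) - y (Max F) \<le> 1" unfolding y_def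
    using frac_lt_1[of "real (Min F) * a"] frac_ge_0[of "real (Max F) * a"] by linarith
  have "real (Max F - Min F) * (y (Min F) - y (Max F)) \<le> real (Max F - Min F) * 1"
    using Y by (intro mult_left_mono) auto
  also have "\<dots> \<le> real n" using D by simp
  finally have "c0 * (real (card F) - 1)^2 \<le> real n" using main by linarith
  then have "(real (card F) - 1)^2 \<le> real n / c0" using c0 by (simp add: field_simps)
  also have "real n / c0 = K * real n * ln (real n)" unfolding c0_def by simp
  finally have "real (card F) - 1 \<le> sqrt (K * real n * ln (real n))" by (rule real_le_rsqrt)
  then show ?thesis unfolding F_def by simp
qed

theorem mainTheorem18:
  fixes \<alpha> :: real
  assumes "\<alpha> \<notin> \<rat>"
    and "pq_bounded_in_average \<alpha>"
  shows "\<exists>c>0. \<forall>\<^sub>F n in sequentially.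
           real (card (A_alpha \<alpha> \<inter> {1..n})) \<ge> c * sqrt (real n / ln (real n))"
proof -
  obtain K where K: "K > 0" and KB: "\<forall>n d p. 3 \<le> n \<longrightarrow> 1 \<le> d \<longrightarrow> d \<le> n \<longrightarrow>
        1 / (K * real d * ln (real n)) \<le> \<bar>real d * \<alpha> - real_of_int p\<bar>"
    using dioph_bound[OF assms] by blast
  define c where "c = 1 / (2 * sqrt K)"
  have "c > 0" unfolding c_def using K by simp
  moreover have "\<forall>\<^sub>F n in sequentially. real (card (A_alpha \<alpha> \<inter> {1..n})) \<ge> c * sqrt (real n / ln (real n))"
    unfolding eventually_sequentially
  proof (intro exI[of _ "max 3 (nat \<lceil>1 / K\<rceil>)"] allI impI)
    fix n assume nN: "max 3 (nat \<lceil>1 / K\<rceil>) \<le> n"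
    then have n: "n \<ge> 3" by simp
    have "real n \<ge> 1 / K" using nN by linarith
    then have Kn: "K * real n \<ge> 1" using K by (simp add: field_simps)
    have ln1: "ln (real n) \<ge> 1"
    proof -
      have "ln (272/100) \<le> ln (real n)" using n by (intro ln_mono) auto
      then show ?thesis using ln_272_gt_1 by linarith
    qed
    define S where "S = sqrt (K * real n * ln (real n))"
    have "K * real n * ln (real n) \<ge> 1 * 1" using Kn ln1 by (intro mult_mono) auto
    then have S1: "S \<ge> 1" unfolding S_def by simp
    define V where "V = B_alpha \<alpha> ` {1..n}"
    define N where "N = card (A_alpha \<alpha> \<inter> {1..n})"
    have VA: "V \<subseteq> A_alpha \<alpha> \<inter> {1..n}"
      unfolding V_def A_alpha_def using B_alpha_range by fastforce
    have cV: "card V \<le> N" unfolding N_def using VA by (intro card_mono) auto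
    have "{1..n} \<subseteq> (\<Union>v\<in>V. {k \<in> {1..n}. B_alpha \<alpha> k = v})" unfolding V_def by auto
    moreover have "finite (\<Union>v\<in>V. {k \<in> {1..n}. B_alpha \<alpha> k = v})"
      by (rule finite_subset[of _ "{1..n}"]) auto
    ultimately have "card {1..n} \<le> card (\<Union>v\<in>V. {k \<in> {1..n}. B_alpha \<alpha> k = v})"
      by (intro card_mono) auto
    also have "\<dots> \<le> (\<Sum>v\<in>V. card {k \<in> {1..n}. B_alpha \<alpha> k = v})" by (rule card_UN_le) (simp add: V_def)
    finally have "real (card {1..n}) \<le> real (\<Sum>v\<in>V. card {k \<in> {1..n}. B_alpha \<alpha> k = v})"
      by (rule of_nat_mono)
    moreover have cn: "card {1..n} = n" by simp
    ultimately have "real n \<le> real (\<Sum>v\<in>V. card {k \<in> {1..n}. B_alpha \<alpha> k = v})" by (simp only: cn)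
    also have "\<dots> = (\<Sum>v\<in>V. real (card {k \<in> {1..n}. B_alpha \<alpha> k = v}))" by simp
    also have "\<dots> \<le> (\<Sum>v\<in>V. 1 + S)"
      using fiber_card[OF assms(1) K KB n] unfolding S_def by (intro sum_mono) auto
    also have "\<dots> = real (card V) * (1 + S)" by simp
    also have "\<dots> \<le> real N * (2 * S)" using cV S1 by (intro mult_mono) auto
    finally have nle: "real n \<le> real N * (2 * S)" .
    have key: "c * sqrt (real n / ln (real n)) * (2 * S) = real n"
    proof -
      have "sqrt (real n / ln (real n)) * S = sqrt (K * (real n * real n))"
        unfolding S_def using ln1 by (simp add: real_sqrt_mult[symmetric] field_simps)
      also have "\<dots> = sqrt K * real n" by (simp add: real_sqrt_mult)
      finally have "sqrt (real n / ln (real n)) * S = sqrt K * real n" .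
      then show ?thesis unfolding c_def using K by (simp add: field_simps)
    qed
    have Spos: "2 * S > 0" using S1 by simp
    have "c * sqrt (real n / ln (real n)) * (2 * S) \<le> real N * (2 * S)" using key nle by simp
    then show "c * sqrt (real n / ln (real n)) \<le> real (card (A_alpha \<alpha> \<inter> {1..n}))"
      using Spos unfolding N_def by simp
  qed
  ultimately show ?thesis by blast
qed


end
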